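(* Let $A,B$ be non-empty compact subsets of $\mathbb{R}$. Then $\max\{\dim_HA,\dim_HB\}\le\dim_H\Lambda(A,B)$, where $\Lambda(A,B)\subseteq\mathbb{R}^2$ carries the Euclidean metric.
   Context: $\dim_H$ is Hausdorff dimension. For $b\in\mathbb{R}$, $\Lambda_A(b)=\{a\in A:|b-a|=\min_{a'\in A}|b-a'|\}$; the set of metric pairs is $\Lambda(A,B)=\{(a,b)\in A\times B:a\in\Lambda_A(b)\text{ or }b\in\Lambda_B(a)\}$. *)

theory Defs
  imports "HOL-Analysis.Analysis"
begin

text \<open>Cost of a covering set in the s-dimensional Hausdorff measure: diam(U)^s,
  with the usual conventions diam({})^s = 0 and diam(U)^0 = 1 for nonempty U.\<close>
definition hcost :: "real \<Rightarrow> 'a::metric_space set \<Rightarrow> ennreal" where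
  "hcost s U = (if U = {} then 0 else if s = 0 then 1 else ennreal (diameter U powr s))"

definition hausdorff_pre :: "real \<Rightarrow> real \<Rightarrow> 'a::metric_space set \<Rightarrow> ennreal" where
  "hausdorff_pre s \<delta> E =
     (INF U \<in> {U :: nat \<Rightarrow> 'a set. E \<subseteq> (\<Union>i. U i) \<and>
                 (\<forall>i. bounded (U i) \<and> diameter (U i) \<le> \<delta>)}.
        \<Sum>i. hcost s (U i))"

definition hausdorff_measure :: "real \<Rightarrow> 'a::metric_space set \<Rightarrow> ennreal" where
  "hausdorff_measure s E = (SUP \<delta> \<in> {0<..}. hausdorff_pre s \<delta> E)"

text \<open>Hausdorff dimension: inf {s \<ge> 0. H^s(E) = 0} (value \<infinity> if no such s).\<close>
definition hausdorff_dim :: "'a::metric_space set \<Rightarrow> ereal" where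
  "hausdorff_dim E = Inf {ereal s | s. 0 \<le> s \<and> hausdorff_measure s E = 0}"

definition nearest :: "real set \<Rightarrow> real \<Rightarrow> real set" where
  "nearest A b = {a \<in> A. \<forall>a' \<in> A. \<bar>b - a\<bar> \<le> \<bar>b - a'\<bar>}"

text \<open>Metric pairs; real \<times> real carries the Euclidean metric.\<close>
definition metric_pairs :: "real set \<Rightarrow> real set \<Rightarrow> (real \<times> real) set" where
  "metric_pairs A B = {(a, b) \<in> A \<times> B. a \<in> nearest A b \<or> b \<in> nearest B a}"

end

theory Submission
  imports Defs
begin

lemma lip_bounded:
  assumes L: "\<And>x y. dist (f x) (f y) \<le> dist x y" and b: "bounded U"
  shows "bounded (f ` U)"
proof -
  from b obtain x e where "\<forall>y\<in>U. dist x y \<le> e" unfolding bounded_def by blast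
  then have "\<forall>y\<in>f ` U. dist (f x) y \<le> e" using L order_trans by blast
  then show ?thesis unfolding bounded_def by blast
qed

lemma lip_diam:
  fixes f :: "'a::metric_space \<Rightarrow> 'b::metric_space"
  assumes L: "\<And>x y. dist (f x) (f y) \<le> dist x y" and b: "bounded U"
  shows "diameter (f ` U) \<le> diameter U"
proof (cases "U = {}")
  case True then show ?thesis by simp
next
  case False
  have "(SUP p\<in>(f ` U) \<times> (f ` U). case p of (x, y) \<Rightarrow> dist x y) \<le> diameter U"
  proof (rule cSUP_least)
    show "(f ` U) \<times> (f ` U) \<noteq> {}" using False by auto
  next
    fix p assume "p \<in> (f ` U) \<times> (f ` U)"
    then obtain x y where "x \<in> U" "y \<in> U" "p = (f x, f y)" by auto
    then show "(case p of (x, y) \<Rightarrow> dist x y) \<le> diameter U"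
      using L[of x y] diameter_bounded_bound[OF b, of x y] by simp
  qed
  then show ?thesis using False unfolding diameter_def[of "f ` U"] by simp
qed

lemma lip_hcost:
  fixes f :: "'a::metric_space \<Rightarrow> 'b::metric_space"
  assumes L: "\<And>x y. dist (f x) (f y) \<le> dist x y" and b: "bounded U" and s: "0 \<le> s"
  shows "hcost s (f ` U) \<le> hcost s U"
proof -
  have d: "diameter (f ` U) \<le> diameter U" using lip_diam[OF L b] .
  have "0 \<le> diameter (f ` U)" by (simp add: diameter_ge_0 lip_bounded[OF L b])
  then have "diameter (f ` U) powr s \<le> diameter U powr s"
    using d s powr_mono2 by blast
  then show ?thesis unfolding hcost_def by (auto simp: ennreal_leI)
qed

lemma lip_hausdorff:
  fixes f :: "'a::metric_space \<Rightarrow> 'b::metric_space"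
  assumes L: "\<And>x y. dist (f x) (f y) \<le> dist x y" and s: "0 \<le> s" and sub: "A \<subseteq> f ` E"
  shows "hausdorff_measure s A \<le> hausdorff_measure s E"
  unfolding hausdorff_measure_def
proof (rule SUP_mono)
  fix \<delta> :: real assume "\<delta> \<in> {0<..}"
  have "hausdorff_pre s \<delta> A \<le> hausdorff_pre s \<delta> E"
    unfolding hausdorff_pre_def
  proof (rule INF_greatest)
    fix U assume U: "U \<in> {U :: nat \<Rightarrow> 'a set. E \<subseteq> (\<Union>i. U i) \<and>
                 (\<forall>i. bounded (U i) \<and> diameter (U i) \<le> \<delta>)}"
    let ?V = "\<lambda>i. f ` U i"
    have "?V \<in> {U :: nat \<Rightarrow> 'b set. A \<subseteq> (\<Union>i. U i) \<and>
                 (\<forall>i. bounded (U i) \<and> diameter (U i) \<le> \<delta>)}"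
    proof -
      have UE: "E \<subseteq> (\<Union>i. U i)" and Ub: "\<And>i. bounded (U i)" and Ud: "\<And>i. diameter (U i) \<le> \<delta>"
        using U by simp_all
      have "A \<subseteq> (\<Union>i. f ` U i)"
      proof
        fix x assume "x \<in> A"
        then obtain y where "y \<in> E" "x = f y" using sub by blast
        then obtain i where "y \<in> U i" using UE by blast
        then show "x \<in> (\<Union>i. f ` U i)" using \<open>x = f y\<close> by blast
      qed
      moreover have "\<forall>i. bounded (f ` U i) \<and> diameter (f ` U i) \<le> \<delta>"
        using lip_bounded[OF L Ub] lip_diam[OF L Ub] Ud order_trans by blast
      ultimately show ?thesis by simp
    qed
    then have "(INF U \<in> {U :: nat \<Rightarrow> 'b set. A \<subseteq> (\<Union>i. U i) \<and>
                 (\<forall>i. bounded (U i) \<and> diameter (U i) \<le> \<delta>)}. \<Sum>i. hcost s (U i))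
          \<le> (\<Sum>i. hcost s (?V i))" by (rule INF_lower)
    also have "\<dots> \<le> (\<Sum>i. hcost s (U i))"
    proof (rule suminf_le)
      fix i
      have b: "bounded (U i)" using U by auto
      show "hcost s (f ` U i) \<le> hcost s (U i)" using lip_hcost[OF L b s] .
    qed (rule summableI)+
    finally show "(INF U \<in> {U :: nat \<Rightarrow> 'b set. A \<subseteq> (\<Union>i. U i) \<and>
                 (\<forall>i. bounded (U i) \<and> diameter (U i) \<le> \<delta>)}. \<Sum>i. hcost s (U i))
          \<le> (\<Sum>i. hcost s (U i))" .
  qed
  then show "\<exists>\<delta>'\<in>{0<..}. hausdorff_pre s \<delta> A \<le> hausdorff_pre s \<delta>' E"
    using \<open>\<delta> \<in> {0<..}\<close> by blast
qed

lemma lip_dim: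
  fixes f :: "'a::metric_space \<Rightarrow> 'b::metric_space"
  assumes L: "\<And>x y. dist (f x) (f y) \<le> dist x y" and sub: "A \<subseteq> f ` E"
  shows "hausdorff_dim A \<le> hausdorff_dim E"
  unfolding hausdorff_dim_def
proof (rule Inf_superset_mono, safe)
  fix s assume "0 \<le> s" "hausdorff_measure s E = 0"
  then have "hausdorff_measure s A = 0"
    using lip_hausdorff[OF L \<open>0 \<le> s\<close> sub] by simp
  then show "\<exists>s'. ereal s = ereal s' \<and> 0 \<le> s' \<and> hausdorff_measure s' A = 0"
    using \<open>0 \<le> s\<close> by blast
qed

theorem proposition4p1:
  fixes A B :: "real set"
  assumes "compact A" "A \<noteq> {}" "compact B" "B \<noteq> {}"
  shows "max (hausdorff_dim A) (hausdorff_dim B) \<le> hausdorff_dim (metric_pairs A B)"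
proof -
  have 1: "A \<subseteq> fst ` metric_pairs A B"
  proof
    fix a assume a: "a \<in> A"
    obtain b where "b \<in> B" "\<And>y. y \<in> B \<Longrightarrow> dist a b \<le> dist a y"
      using distance_attains_inf[of B a] assms compact_imp_closed by blast
    then have "(a, b) \<in> metric_pairs A B"
      using a by (auto simp: metric_pairs_def nearest_def dist_real_def abs_minus_commute)
    then show "a \<in> fst ` metric_pairs A B" by force
  qed
  have 2: "B \<subseteq> snd ` metric_pairs A B"
  proof
    fix b assume b: "b \<in> B"
    obtain a where "a \<in> A" "\<And>y. y \<in> A \<Longrightarrow> dist b a \<le> dist b y"
      using distance_attains_inf[of A b] assms compact_imp_closed by blast
    then have "(a, b) \<in> metric_pairs A B"
      using b by (auto simp: metric_pairs_def nearest_def dist_real_def)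
    then show "b \<in> snd ` metric_pairs A B" by force
  qed
  show ?thesis
    using lip_dim[OF dist_fst_le 1] lip_dim[OF dist_snd_le 2] by simp
qed

end
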